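(* Let $(T_1,T_2)$ be a commuting pair of strict contractions ($\|T_1\|<1$, $\|T_2\|<1$) on a complex Banach space $\mathbb X$ such that for $i=1,2$ the function $A_{T_i}(x)=(\|x\|^2-\|T_ix\|^2)^{1/2}$ defines a norm on $\mathbb X$, and let $\mathbb X_i=(\mathbb X,A_{T_i})$. Suppose there is a unitary $S:\mathbb X_1\oplus_2\mathbb X_2\to\mathbb X_1\oplus_2\mathbb X_2$ with $$S(T_2x,x)=(x,T_1x)\quad\text{for all }x\in\mathbb X.$$ Then $(T_1,T_2)$ admits a minimal isometric dilation on the Banach space $\widetilde{\mathbb X}=\mathbb X\oplus_2\ell_2(\mathbb X_1\oplus_2\mathbb X_2)$; i.e. there are commuting linear isometries $V_1,V_2$ on $\widetilde{\mathbb X}$ with $P_{\mathbb X}V_1^{s_1}V_2^{s_2}x=T_1^{s_1}T_2^{s_2}x$ for all $x\in\mathbb X$, $s_1,s_2\in\mathbb N\cup\{0\}$, and $\widetilde{\mathbb X}=\overline{\operatorname{span}}\{V_1^{s_1}V_2^{s_2}x:x\in\mathbb X,\ s_1,s_2\in\mathbb N\cup\{0\}\}$.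
   Context: $A_T(x)=(\|x\|^2-\|Tx\|^2)^{1/2}$ for a contraction $T$; "$A_T$ defines a norm" means it is a norm on $\mathbb X$, and $(\mathbb X,A_T)$ is $\mathbb X$ with this norm. $\oplus_2$ denotes the direct $2$-sum, with norm $\|(x_1,x_2)\|=(\|x_1\|^2+\|x_2\|^2)^{1/2}$; $\ell_2(\mathbb Y)$ is the space of square-summable sequences in $\mathbb Y$ with norm $(\sum\|y_n\|^2)^{1/2}$. $\mathbb X$ is identified with $\{(x,\mathbf 0,\mathbf 0,\dots)\}\subseteq\widetilde{\mathbb X}$ and $P_{\mathbb X}(x,(x_1,x_2),\dots)=x$. A unitary is a surjective linear isometry. *)

theory Defs
  imports "HOL-Analysis.Analysis"
begin

class complex_normed_vector = real_normed_vector +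
  fixes scaleC :: "complex \<Rightarrow> 'a \<Rightarrow> 'a"
  assumes scaleC_add_right: "scaleC a (x + y) = scaleC a x + scaleC a y"
    and scaleC_add_left: "scaleC (a + b) x = scaleC a x + scaleC b x"
    and scaleC_scaleC: "scaleC a (scaleC b x) = scaleC (a * b) x"
    and scaleC_one: "scaleC 1 x = x"
    and scaleR_scaleC: "scaleR r x = scaleC (complex_of_real r) x"
    and norm_scaleC: "norm (scaleC a x) = cmod a * norm x"

definition clinear :: "('a::complex_normed_vector \<Rightarrow> 'b::complex_normed_vector) \<Rightarrow> bool" where
  "clinear f \<longleftrightarrow> (\<forall>x y. f (x + y) = f x + f y) \<and> (\<forall>c x. f (scaleC c x) = scaleC c (f x))"

definition cblinear :: "('a::complex_normed_vector \<Rightarrow> 'b::complex_normed_vector) \<Rightarrow> bool" where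
  "cblinear f \<longleftrightarrow> clinear f \<and> bounded_linear f"

definition is_norm :: "('a::complex_normed_vector \<Rightarrow> real) \<Rightarrow> bool" where
  "is_norm N \<longleftrightarrow> (\<forall>x. N x \<ge> 0) \<and> (\<forall>x. N x = 0 \<longleftrightarrow> x = 0)
     \<and> (\<forall>c x. N (scaleC c x) = cmod c * N x) \<and> (\<forall>x y. N (x + y) \<le> N x + N y)"

definition A_T :: "('a::complex_normed_vector \<Rightarrow> 'a) \<Rightarrow> 'a \<Rightarrow> real" where
  "A_T T x = sqrt ((norm x)\<^sup>2 - (norm (T x))\<^sup>2)"

definition N12 :: "('a::complex_normed_vector \<Rightarrow> 'a) \<Rightarrow> ('a \<Rightarrow> 'a) \<Rightarrow> 'a \<times> 'a \<Rightarrow> real" where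
  "N12 T1 T2 p = sqrt ((A_T T1 (fst p))\<^sup>2 + (A_T T2 (snd p))\<^sup>2)"

definition clinear2 :: "('a::complex_normed_vector \<times> 'a \<Rightarrow> 'a \<times> 'a) \<Rightarrow> bool" where
  "clinear2 S \<longleftrightarrow>
     (\<forall>u v u' v'. S (u + u', v + v') = (fst (S (u, v)) + fst (S (u', v')), snd (S (u, v)) + snd (S (u', v'))))
   \<and> (\<forall>c u v. S (scaleC c u, scaleC c v) = (scaleC c (fst (S (u, v))), scaleC c (snd (S (u, v)))))"

definition unitary12 :: "('a::complex_normed_vector \<Rightarrow> 'a) \<Rightarrow> ('a \<Rightarrow> 'a) \<Rightarrow> ('a \<times> 'a \<Rightarrow> 'a \<times> 'a) \<Rightarrow> bool" where
  "unitary12 T1 T2 S \<longleftrightarrow> clinear2 S \<and> surj S \<and> (\<forall>p. N12 T1 T2 (S p) = N12 T1 T2 p)"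

text \<open>The space X~ = X (+)_2 l_2(X_1 (+)_2 X_2), elements represented as pairs (x, f)
  with f a square-summable sequence in X_1 (+)_2 X_2.\<close>
type_synonym 'a tilde = "'a \<times> (nat \<Rightarrow> 'a \<times> 'a)"

definition tilde_space :: "('a::complex_normed_vector \<Rightarrow> 'a) \<Rightarrow> ('a \<Rightarrow> 'a) \<Rightarrow> 'a tilde set" where
  "tilde_space T1 T2 = {z. summable (\<lambda>n. (N12 T1 T2 (snd z n))\<^sup>2)}"

definition tnorm :: "('a::complex_normed_vector \<Rightarrow> 'a) \<Rightarrow> ('a \<Rightarrow> 'a) \<Rightarrow> 'a tilde \<Rightarrow> real" where
  "tnorm T1 T2 z = sqrt ((norm (fst z))\<^sup>2 + (\<Sum>n. (N12 T1 T2 (snd z n))\<^sup>2))"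

definition tadd :: "'a::complex_normed_vector tilde \<Rightarrow> 'a tilde \<Rightarrow> 'a tilde" where
  "tadd z w = (fst z + fst w, \<lambda>n. (fst (snd z n) + fst (snd w n), snd (snd z n) + snd (snd w n)))"

definition tscale :: "complex \<Rightarrow> 'a::complex_normed_vector tilde \<Rightarrow> 'a tilde" where
  "tscale c z = (scaleC c (fst z), \<lambda>n. (scaleC c (fst (snd z n)), scaleC c (snd (snd z n))))"

definition tzero :: "'a::complex_normed_vector tilde" where
  "tzero = (0, \<lambda>n. (0, 0))"

definition temb :: "'a::complex_normed_vector \<Rightarrow> 'a tilde" where
  "temb x = (x, \<lambda>n. (0, 0))"

definition PX :: "'a::complex_normed_vector tilde \<Rightarrow> 'a" where
  "PX z = fst z"

definition tlinear_isometry :: "('a::complex_normed_vector \<Rightarrow> 'a) \<Rightarrow> ('a \<Rightarrow> 'a) \<Rightarrow> ('a tilde \<Rightarrow> 'a tilde) \<Rightarrow> bool" where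
  "tlinear_isometry T1 T2 V \<longleftrightarrow>
     V ` tilde_space T1 T2 \<subseteq> tilde_space T1 T2
   \<and> (\<forall>z\<in>tilde_space T1 T2. \<forall>w\<in>tilde_space T1 T2. V (tadd z w) = tadd (V z) (V w))
   \<and> (\<forall>c. \<forall>z\<in>tilde_space T1 T2. V (tscale c z) = tscale c (V z))
   \<and> (\<forall>z\<in>tilde_space T1 T2. tnorm T1 T2 (V z) = tnorm T1 T2 z)"

inductive_set tspan :: "'a::complex_normed_vector tilde set \<Rightarrow> 'a tilde set" for G where
  zero: "tzero \<in> tspan G"
| gen: "g \<in> G \<Longrightarrow> g \<in> tspan G"
| add: "z \<in> tspan G \<Longrightarrow> w \<in> tspan G \<Longrightarrow> tadd z w \<in> tspan G"
| scale: "z \<in> tspan G \<Longrightarrow> tscale c z \<in> tspan G"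

definition tclosed_span_eq :: "('a::complex_normed_vector \<Rightarrow> 'a) \<Rightarrow> ('a \<Rightarrow> 'a) \<Rightarrow> 'a tilde set \<Rightarrow> bool" where
  "tclosed_span_eq T1 T2 G \<longleftrightarrow> tspan G \<subseteq> tilde_space T1 T2 \<and>
     (\<forall>z\<in>tilde_space T1 T2. \<forall>e>0. \<exists>w\<in>tspan G. tnorm T1 T2 (tadd z (tscale (-1) w)) < e)"

end

theory Submission
  imports Defs
begin

lemma scaleC_zero_right[simp]: "scaleC c (0::'a::complex_normed_vector) = 0"
  using norm_scaleC[of c "0::'a"] by simp

lemma scaleC_minus1[simp]: "scaleC (-1) (x::'a::complex_normed_vector) = - x"
  using scaleR_scaleC[of "-1" x] by simp

definition V1f :: "('a::complex_normed_vector \<Rightarrow> 'a) \<Rightarrow> ('a \<times> 'a \<Rightarrow> 'a \<times> 'a) \<Rightarrow> 'a tilde \<Rightarrow> 'a tilde" where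
  "V1f T1 S z = (T1 (fst z), \<lambda>n. S (if n = 0 then (fst z, snd (snd z 0)) else (fst (snd z (n-1)), snd (snd z n))))"

definition V2f :: "('a::complex_normed_vector \<Rightarrow> 'a) \<Rightarrow> ('a \<times> 'a \<Rightarrow> 'a \<times> 'a) \<Rightarrow> 'a tilde \<Rightarrow> 'a tilde" where
  "V2f T2 R z = (T2 (fst z), \<lambda>n. (fst (R (snd z n)), if n = 0 then fst z else snd (R (snd z (n-1)))))"

lemma sq_sum_le: "(a + b)\<^sup>2 \<le> 2 * a\<^sup>2 + 2 * (b::real)\<^sup>2"
proof -
  have "0 \<le> (a - b)\<^sup>2" by simp
  then show ?thesis by (simp add: power2_eq_square algebra_simps)
qed

lemma shift_sums:
  fixes \<alpha> \<beta> :: "nat \<Rightarrow> real"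
  assumes "summable \<alpha>" "summable \<beta>"
  shows "(\<lambda>n. \<alpha> n + (if n = 0 then c else \<beta> (n-1))) sums (c + suminf \<alpha> + suminf \<beta>)"
proof -
  have "(\<lambda>n. (\<lambda>n. if n = 0 then c else \<beta> (n-1)) (Suc n)) sums suminf \<beta>"
    using assms(2) summable_sums by simp
  then have "(\<lambda>n. if n = 0 then c else \<beta> (n-1)) sums (suminf \<beta> + c)"
    by (subst (asm) sums_Suc_iff) simp
  from sums_add[OF summable_sums[OF assms(1)] this] show ?thesis by (simp add: algebra_simps)
qed

context
  fixes T1 T2 :: "'a::complex_normed_vector \<Rightarrow> 'a" and S R :: "'a \<times> 'a \<Rightarrow> 'a \<times> 'a"
  assumes lin1: "cblinear T1" and lin2: "cblinear T2"
    and on1: "onorm T1 < 1" and on2: "onorm T2 < 1"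
    and comm: "T1 \<circ> T2 = T2 \<circ> T1"
    and n1: "is_norm (A_T T1)" and n2: "is_norm (A_T T2)"
    and U: "unitary12 T1 T2 S"
    and hS: "\<forall>x. S (T2 x, x) = (x, T1 x)"
    and R_def: "R = inv S"
begin

lemma T1_add: "T1 (x + y) = T1 x + T1 y" and T1_scale: "T1 (scaleC c x) = scaleC c (T1 x)"
  and T2_add: "T2 (x + y) = T2 x + T2 y" and T2_scale: "T2 (scaleC c x) = scaleC c (T2 x)"
  using lin1 lin2 unfolding cblinear_def clinear_def by auto

lemma T1_0[simp]: "T1 0 = 0" and T2_0[simp]: "T2 0 = 0"
  using lin1 lin2 unfolding cblinear_def by (auto intro: linear_simps)

lemma T12: "T1 (T2 x) = T2 (T1 x)"
  using comm by (metis comp_apply)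

lemma normT1: "norm (T1 x) \<le> norm x"
proof -
  have "norm (T1 x) \<le> onorm T1 * norm x" using lin1 onorm unfolding cblinear_def by blast
  also have "\<dots> \<le> norm x" using on1 by (simp add: mult_left_le_one_le onorm_pos_le lin1[unfolded cblinear_def])
  finally show ?thesis .
qed

lemma normT2: "norm (T2 x) \<le> norm x"
proof -
  have "norm (T2 x) \<le> onorm T2 * norm x" using lin2 onorm unfolding cblinear_def by blast
  also have "\<dots> \<le> norm x" using on2 by (simp add: mult_left_le_one_le onorm_pos_le lin2[unfolded cblinear_def])
  finally show ?thesis .
qed

lemma A1sq: "(A_T T1 x)\<^sup>2 = (norm x)\<^sup>2 - (norm (T1 x))\<^sup>2"
proof -
  have "(norm (T1 x))\<^sup>2 \<le> (norm x)\<^sup>2" using normT1[of x] by (simp add: power_mono)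
  then show ?thesis unfolding A_T_def by simp
qed
lemma A2sq: "(A_T T2 x)\<^sup>2 = (norm x)\<^sup>2 - (norm (T2 x))\<^sup>2"
proof -
  have "(norm (T2 x))\<^sup>2 \<le> (norm x)\<^sup>2" using normT2[of x] by (simp add: power_mono)
  then show ?thesis unfolding A_T_def by simp
qed

lemma A1_nn: "A_T T1 x \<ge> 0" and A2_nn: "A_T T2 x \<ge> 0"
  unfolding A_T_def by (auto intro: real_sqrt_ge_zero simp: normT1 normT2 power_mono)

lemma N12sq: "(N12 T1 T2 p)\<^sup>2 = (A_T T1 (fst p))\<^sup>2 + (A_T T2 (snd p))\<^sup>2"
  unfolding N12_def by simp

lemma N12_nn: "N12 T1 T2 p \<ge> 0" unfolding N12_def by simp

lemma N12_zero_iff: "N12 T1 T2 p = 0 \<longleftrightarrow> p = (0, 0)"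
proof -
  have "N12 T1 T2 p = 0 \<longleftrightarrow> (A_T T1 (fst p))\<^sup>2 + (A_T T2 (snd p))\<^sup>2 = 0"
    unfolding N12_def by simp
  also have "\<dots> \<longleftrightarrow> A_T T1 (fst p) = 0 \<and> A_T T2 (snd p) = 0"
    by (simp add: sum_power2_eq_zero_iff)
  also have "\<dots> \<longleftrightarrow> p = (0,0)" using n1 n2 unfolding is_norm_def by (cases p) auto
  finally show ?thesis .
qed

lemma N12_00[simp]: "N12 T1 T2 (0, 0) = 0" using N12_zero_iff by simp

lemma S_add: "S (u + u', v + v') = (fst (S (u, v)) + fst (S (u', v')), snd (S (u, v)) + snd (S (u', v')))"
  and S_scale: "S (scaleC c u, scaleC c v) = (scaleC c (fst (S (u, v))), scaleC c (snd (S (u, v))))"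
  using U unfolding unitary12_def clinear2_def by auto

lemma N12_S: "N12 T1 T2 (S p) = N12 T1 T2 p" using U unfolding unitary12_def by (cases p) auto

lemma S00[simp]: "S (0, 0) = (0, 0)" using hS[rule_format, of 0] by simp

lemma S_minus: "S (- u, - v) = (- fst (S (u, v)), - snd (S (u, v)))"
  using S_scale[of "-1" u v] by simp

lemma S_inj: "inj S"
proof (rule injI)
  fix p q assume eq: "S p = S q"
  obtain u v u' v' where p: "p = (u, v)" and q: "q = (u', v')" by (cases p, cases q) auto
  have "S (u + - u', v + - v') = (0, 0)"
    unfolding S_add S_minus using eq p q by simp
  then have "N12 T1 T2 (u + - u', v + - v') = 0" using N12_S by (metis N12_00)
  then show "p = q" using p q N12_zero_iff by simp
qed

lemma SR[simp]: "S (R p) = p"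
  using U unfolding unitary12_def R_def by (simp add: surj_f_inv_f)

lemma RS[simp]: "R (S p) = p"
  using S_inj unfolding R_def by simp

lemma R00[simp]: "R (0, 0) = (0, 0)" by (metis RS S00)

lemma R_add: "R (u + u', v + v') = (fst (R (u, v)) + fst (R (u', v')), snd (R (u, v)) + snd (R (u', v')))"
proof -
  have "S (fst (R (u, v)) + fst (R (u', v')), snd (R (u, v)) + snd (R (u', v'))) = (u + u', v + v')"
    unfolding S_add by simp
  then show ?thesis by (metis RS)
qed

lemma R_scale: "R (scaleC c u, scaleC c v) = (scaleC c (fst (R (u, v))), scaleC c (snd (R (u, v))))"
proof -
  have "S (scaleC c (fst (R (u, v))), scaleC c (snd (R (u, v)))) = (scaleC c u, scaleC c v)"
    unfolding S_scale by simp
  then show ?thesis by (metis RS)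
qed

lemma N12_R: "N12 T1 T2 (R p) = N12 T1 T2 p" by (metis N12_S SR)

lemma V1_add: "V1f T1 S (tadd z w) = tadd (V1f T1 S z) (V1f T1 S w)"
  unfolding V1f_def tadd_def by (auto simp: T1_add S_add intro!: ext)

lemma V2_add: "V2f T2 R (tadd z w) = tadd (V2f T2 R z) (V2f T2 R w)"
  unfolding V2f_def tadd_def by (auto simp: T2_add R_add intro!: ext)

lemma V1_scale: "V1f T1 S (tscale c z) = tscale c (V1f T1 S z)"
  unfolding V1f_def tscale_def by (auto simp: T1_scale S_scale intro!: ext)

lemma V2_scale: "V2f T2 R (tscale c z) = tscale c (V2f T2 R z)"
  unfolding V2f_def tscale_def by (auto simp: T2_scale R_scale intro!: ext)

lemma V1_zero: "V1f T1 S tzero = tzero"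
  unfolding V1f_def tzero_def by (auto intro!: ext)

lemma V2_zero: "V2f T2 R tzero = tzero"
  unfolding V2f_def tzero_def by (auto intro!: ext)

lemma V12: "V1f T1 S (V2f T2 R z) = (T1 (T2 (fst z)), \<lambda>n. if n = 0 then (fst z, T1 (fst z)) else snd z (n - 1))"
  unfolding V1f_def V2f_def using hS by (auto intro!: ext)

lemma V21: "V2f T2 R (V1f T1 S z) = (T1 (T2 (fst z)), \<lambda>n. if n = 0 then (fst z, T1 (fst z)) else snd z (n - 1))"
  unfolding V1f_def V2f_def by (auto simp: T12 intro!: ext)

lemma V_comm: "V1f T1 S (V2f T2 R z) = V2f T2 R (V1f T1 S z)"
  using V12 V21 by simp

lemma summ_parts:
  assumes "summable (\<lambda>n. (N12 T1 T2 (f n))\<^sup>2)"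
  shows "summable (\<lambda>n. (A_T T1 (fst (f n)))\<^sup>2)" "summable (\<lambda>n. (A_T T2 (snd (f n)))\<^sup>2)"
    "(\<Sum>n. (A_T T1 (fst (f n)))\<^sup>2) + (\<Sum>n. (A_T T2 (snd (f n)))\<^sup>2) = (\<Sum>n. (N12 T1 T2 (f n))\<^sup>2)"
proof -
  show s1: "summable (\<lambda>n. (A_T T1 (fst (f n)))\<^sup>2)"
    by (rule summable_comparison_test'[OF assms]) (simp add: N12sq)
  show s2: "summable (\<lambda>n. (A_T T2 (snd (f n)))\<^sup>2)"
    by (rule summable_comparison_test'[OF assms]) (simp add: N12sq)
  show "(\<Sum>n. (A_T T1 (fst (f n)))\<^sup>2) + (\<Sum>n. (A_T T2 (snd (f n)))\<^sup>2) = (\<Sum>n. (N12 T1 T2 (f n))\<^sup>2)"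
    using suminf_add[OF s1 s2] by (simp add: N12sq)
qed

lemma V1_norm:
  assumes "z \<in> tilde_space T1 T2"
  shows "V1f T1 S z \<in> tilde_space T1 T2" "tnorm T1 T2 (V1f T1 S z) = tnorm T1 T2 z"
proof -
  let ?e = "snd z" and ?x = "fst z"
  let ?a = "\<lambda>n. (A_T T1 (fst (?e n)))\<^sup>2" and ?b = "\<lambda>n. (A_T T2 (snd (?e n)))\<^sup>2"
  have sz: "summable (\<lambda>n. (N12 T1 T2 (?e n))\<^sup>2)" using assms unfolding tilde_space_def by simp
  note P = summ_parts[OF sz]
  have eq: "(\<lambda>n. (N12 T1 T2 (snd (V1f T1 S z) n))\<^sup>2) = (\<lambda>n. ?b n + (if n = 0 then (A_T T1 ?x)\<^sup>2 else ?a (n - 1)))"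
    unfolding V1f_def by (auto simp: N12_S N12sq intro!: ext)
  have sm: "(\<lambda>n. (N12 T1 T2 (snd (V1f T1 S z) n))\<^sup>2) sums ((A_T T1 ?x)\<^sup>2 + suminf ?b + suminf ?a)"
    unfolding eq by (rule shift_sums) (use P in auto)
  then show "V1f T1 S z \<in> tilde_space T1 T2" unfolding tilde_space_def by (auto simp: sums_summable)
  have "(\<Sum>n. (N12 T1 T2 (snd (V1f T1 S z) n))\<^sup>2) = (A_T T1 ?x)\<^sup>2 + (\<Sum>n. (N12 T1 T2 (?e n))\<^sup>2)"
    using sums_unique[OF sm] P(3) by simp
  then show "tnorm T1 T2 (V1f T1 S z) = tnorm T1 T2 z"
    unfolding tnorm_def by (simp add: V1f_def A1sq)
qed

lemma V2_norm:
  assumes "z \<in> tilde_space T1 T2"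
  shows "V2f T2 R z \<in> tilde_space T1 T2" "tnorm T1 T2 (V2f T2 R z) = tnorm T1 T2 z"
proof -
  let ?e = "\<lambda>n. R (snd z n)" and ?x = "fst z"
  let ?a = "\<lambda>n. (A_T T1 (fst (?e n)))\<^sup>2" and ?b = "\<lambda>n. (A_T T2 (snd (?e n)))\<^sup>2"
  have sz: "summable (\<lambda>n. (N12 T1 T2 (?e n))\<^sup>2)" using assms unfolding tilde_space_def by (simp add: N12_R)
  note P = summ_parts[OF sz]
  have eq: "(\<lambda>n. (N12 T1 T2 (snd (V2f T2 R z) n))\<^sup>2) = (\<lambda>n. ?a n + (if n = 0 then (A_T T2 ?x)\<^sup>2 else ?b (n - 1)))"
    unfolding V2f_def by (auto simp: N12sq intro!: ext)
  have sm: "(\<lambda>n. (N12 T1 T2 (snd (V2f T2 R z) n))\<^sup>2) sums ((A_T T2 ?x)\<^sup>2 + suminf ?a + suminf ?b)"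
    unfolding eq by (rule shift_sums) (use P in auto)
  then show "V2f T2 R z \<in> tilde_space T1 T2" unfolding tilde_space_def by (auto simp: sums_summable)
  have "(\<Sum>n. (N12 T1 T2 (snd (V2f T2 R z) n))\<^sup>2) = (A_T T2 ?x)\<^sup>2 + (\<Sum>n. (N12 T1 T2 (snd z n))\<^sup>2)"
    using sums_unique[OF sm] P(3) by (simp add: N12_R)
  then show "tnorm T1 T2 (V2f T2 R z) = tnorm T1 T2 z"
    unfolding tnorm_def by (simp add: V2f_def A2sq)
qed

lemma N12_add_le: "(N12 T1 T2 (fst p + fst q, snd p + snd q))\<^sup>2 \<le> 2 * (N12 T1 T2 p)\<^sup>2 + 2 * (N12 T1 T2 q)\<^sup>2"
proof -
  have t1: "A_T T1 (fst p + fst q) \<le> A_T T1 (fst p) + A_T T1 (fst q)" using n1 unfolding is_norm_def by blast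
  have t2: "A_T T2 (snd p + snd q) \<le> A_T T2 (snd p) + A_T T2 (snd q)" using n2 unfolding is_norm_def by blast
  have "(A_T T1 (fst p + fst q))\<^sup>2 \<le> (A_T T1 (fst p) + A_T T1 (fst q))\<^sup>2"
    using t1 A1_nn by (simp add: power_mono)
  also have "\<dots> \<le> 2 * (A_T T1 (fst p))\<^sup>2 + 2 * (A_T T1 (fst q))\<^sup>2"
    by (rule sq_sum_le)
  finally have a: "(A_T T1 (fst p + fst q))\<^sup>2 \<le> 2 * (A_T T1 (fst p))\<^sup>2 + 2 * (A_T T1 (fst q))\<^sup>2" .
  have "(A_T T2 (snd p + snd q))\<^sup>2 \<le> (A_T T2 (snd p) + A_T T2 (snd q))\<^sup>2"
    using t2 A2_nn by (simp add: power_mono)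
  also have "\<dots> \<le> 2 * (A_T T2 (snd p))\<^sup>2 + 2 * (A_T T2 (snd q))\<^sup>2"
    by (rule sq_sum_le)
  finally have b: "(A_T T2 (snd p + snd q))\<^sup>2 \<le> 2 * (A_T T2 (snd p))\<^sup>2 + 2 * (A_T T2 (snd q))\<^sup>2" .
  show ?thesis using a b by (simp add: N12sq)
qed

lemma N12_scale: "(N12 T1 T2 (scaleC c (fst p), scaleC c (snd p)))\<^sup>2 = (cmod c)\<^sup>2 * (N12 T1 T2 p)\<^sup>2"
proof -
  have "A_T T1 (scaleC c (fst p)) = cmod c * A_T T1 (fst p)" using n1 unfolding is_norm_def by blast
  moreover have "A_T T2 (scaleC c (snd p)) = cmod c * A_T T2 (snd p)" using n2 unfolding is_norm_def by blast
  ultimately show ?thesis by (simp add: N12sq power_mult_distrib algebra_simps)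
qed

lemma ts_add: "z \<in> tilde_space T1 T2 \<Longrightarrow> w \<in> tilde_space T1 T2 \<Longrightarrow> tadd z w \<in> tilde_space T1 T2"
  unfolding tilde_space_def tadd_def
  apply simp
  apply (rule summable_comparison_test'[where g = "\<lambda>n. 2 * (N12 T1 T2 (snd z n))\<^sup>2 + 2 * (N12 T1 T2 (snd w n))\<^sup>2"])
  apply (intro summable_add summable_mult; simp)
  using N12_add_le by simp

lemma ts_scale: "z \<in> tilde_space T1 T2 \<Longrightarrow> tscale c z \<in> tilde_space T1 T2"
  unfolding tilde_space_def tscale_def using N12_scale by (simp add: summable_mult)

lemma ts_zero: "tzero \<in> tilde_space T1 T2"
  unfolding tilde_space_def tzero_def by simp

lemma ts_temb: "temb x \<in> tilde_space T1 T2"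
  unfolding tilde_space_def temb_def by simp

lemma ts_pow: "z \<in> tilde_space T1 T2 \<Longrightarrow> (V1f T1 S ^^ s1) ((V2f T2 R ^^ s2) z) \<in> tilde_space T1 T2"
proof -
  assume z: "z \<in> tilde_space T1 T2"
  have a: "(V2f T2 R ^^ s2) z \<in> tilde_space T1 T2" by (induction s2) (use z V2_norm in auto)
  show ?thesis by (induction s1) (use a V1_norm in auto)
qed

definition "GG = {(V1f T1 S ^^ s1) ((V2f T2 R ^^ s2) (temb x)) | x s1 s2. True}"

lemma span_sub: "w \<in> tspan GG \<Longrightarrow> w \<in> tilde_space T1 T2"
  by (induction rule: tspan.induct) (auto simp: GG_def ts_zero ts_add ts_scale ts_pow ts_temb)

lemma V2_pow_comm: "V2f T2 R ((V1f T1 S ^^ n) z) = (V1f T1 S ^^ n) (V2f T2 R z)"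
  by (induction n arbitrary: z) (simp_all add: V_comm[symmetric])

lemma span_V1: "w \<in> tspan GG \<Longrightarrow> V1f T1 S w \<in> tspan GG"
proof (induction rule: tspan.induct)
  case zero then show ?case by (simp add: V1_zero tspan.zero)
next
  case (gen g)
  then obtain x s1 s2 where "g = (V1f T1 S ^^ s1) ((V2f T2 R ^^ s2) (temb x))" unfolding GG_def by blast
  then have "V1f T1 S g = (V1f T1 S ^^ Suc s1) ((V2f T2 R ^^ s2) (temb x))" by simp
  then have "V1f T1 S g \<in> GG" unfolding GG_def by blast
  then show ?case by (rule tspan.gen)
next
  case (add z w) then show ?case by (simp add: V1_add tspan.add)
next
  case (scale z c) then show ?case by (simp add: V1_scale tspan.scale)
qed

lemma span_V2: "w \<in> tspan GG \<Longrightarrow> V2f T2 R w \<in> tspan GG"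
proof (induction rule: tspan.induct)
  case zero then show ?case by (simp add: V2_zero tspan.zero)
next
  case (gen g)
  then obtain x s1 s2 where "g = (V1f T1 S ^^ s1) ((V2f T2 R ^^ s2) (temb x))" unfolding GG_def by blast
  then have "V2f T2 R g = (V1f T1 S ^^ s1) ((V2f T2 R ^^ Suc s2) (temb x))" by (simp add: V2_pow_comm)
  then have "V2f T2 R g \<in> GG" unfolding GG_def by blast
  then show ?case by (rule tspan.gen)
next
  case (add z w) then show ?case by (simp add: V2_add tspan.add)
next
  case (scale z c) then show ?case by (simp add: V2_scale tspan.scale)
qed

lemma temb_G: "temb x \<in> tspan GG"
proof -
  have "temb x = (V1f T1 S ^^ 0) ((V2f T2 R ^^ 0) (temb x))" by simp
  then have "temb x \<in> GG" unfolding GG_def by blast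
  then show ?thesis by (rule tspan.gen)
qed

lemma span_diff: "a \<in> tspan GG \<Longrightarrow> b \<in> tspan GG \<Longrightarrow> tadd a (tscale (-1) b) \<in> tspan GG"
  by (intro tspan.add tspan.scale)

definition "delta k e = ((0::'a), \<lambda>n. if n = k then e else (0, 0))"

lemma delta0_a: "delta 0 (S (a, 0)) = tadd (V1f T1 S (temb a)) (tscale (-1) (temb (T1 a)))"
  unfolding delta_def V1f_def temb_def tadd_def tscale_def by (auto intro!: ext)

lemma delta0_b: "delta 0 (0, b) = tadd (V2f T2 R (temb b)) (tscale (-1) (temb (T2 b)))"
  unfolding delta_def V2f_def temb_def tadd_def tscale_def by (auto intro!: ext)

lemma delta0_Sb: "delta 0 (S (0, b)) = V1f T1 S (delta 0 (0, b))"
  unfolding delta_def V1f_def by (auto intro!: ext)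

lemma delta0_split: "delta 0 e = tadd (delta 0 (S (fst (R e), 0))) (delta 0 (S (0, snd (R e))))"
proof -
  have "e = S (fst (R e) + 0, 0 + snd (R e))" by simp
  then have "e = (fst (S (fst (R e), 0)) + fst (S (0, snd (R e))), snd (S (fst (R e), 0)) + snd (S (0, snd (R e))))"
    using S_add by metis
  then show ?thesis unfolding delta_def tadd_def by (auto intro!: ext)
qed

lemma delta0_G: "delta 0 e \<in> tspan GG"
proof -
  have a: "delta 0 (S (a, 0)) \<in> tspan GG" for a
    unfolding delta0_a by (intro span_diff span_V1 temb_G)
  have b: "delta 0 (S (0, b)) \<in> tspan GG" for b
    unfolding delta0_Sb delta0_b by (intro span_diff span_V1 span_V2 temb_G)
  show ?thesis unfolding delta0_split[of e] by (intro tspan.add a b)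
qed

lemma delta_Suc: "delta (Suc k) e = V1f T1 S (V2f T2 R (delta k e))"
  unfolding V12 unfolding delta_def by (auto intro!: ext)

lemma delta_G: "delta k e \<in> tspan GG"
  by (induction k) (auto simp: delta0_G delta_Suc intro: span_V1 span_V2)

definition "trunc N z = (fst z, \<lambda>n. if n < N then snd z n else ((0::'a), (0::'a)))"

lemma trunc_G: "trunc N z \<in> tspan GG"
proof (induction N)
  case 0
  have "trunc 0 z = temb (fst z)" unfolding trunc_def temb_def by simp
  then show ?case using temb_G by simp
next
  case (Suc N)
  have "trunc (Suc N) z = tadd (trunc N z) (delta N (snd z N))"
    unfolding trunc_def delta_def tadd_def by (auto intro!: ext)
  then show ?case using Suc tspan.add delta_G by metis
qed

lemma density:
  assumes z: "z \<in> tilde_space T1 T2" and e: "e > 0"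
  shows "\<exists>w\<in>tspan GG. tnorm T1 T2 (tadd z (tscale (-1) w)) < e"
proof -
  let ?f = "\<lambda>n. (N12 T1 T2 (snd z n))\<^sup>2"
  have sf: "summable ?f" using z unfolding tilde_space_def by simp
  obtain N where N: "\<forall>n\<ge>N. norm (\<Sum>i. ?f (i + n)) < e\<^sup>2"
    using suminf_exist_split[OF _ sf, of "e\<^sup>2"] e by auto
  let ?d = "tadd z (tscale (-1) (trunc N z))"
  let ?g = "\<lambda>n. if n < N then 0 else ?f n"
  have fst_d: "fst ?d = 0" unfolding tadd_def tscale_def trunc_def by simp
  have snd_d: "(\<lambda>n. (N12 T1 T2 (snd ?d n))\<^sup>2) = ?g"
    unfolding tadd_def tscale_def trunc_def by (auto intro!: ext)
  have sh: "summable (\<lambda>i. ?f (i + N))" using sf summable_iff_shift[of ?f N] by simp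
  have "(\<lambda>i. ?g (i + N)) sums (\<Sum>i. ?f (i + N))" using summable_sums[OF sh] by simp
  then have "?g sums (\<Sum>i. ?f (i + N))" by (subst (asm) sums_zero_iff_shift) auto
  then have "(\<Sum>n. (N12 T1 T2 (snd ?d n))\<^sup>2) = (\<Sum>i. ?f (i + N))" unfolding snd_d by (rule sums_unique[symmetric])
  moreover have "(\<Sum>i. ?f (i + N)) < e\<^sup>2" using N by auto
  ultimately have "(\<Sum>n. (N12 T1 T2 (snd ?d n))\<^sup>2) < e\<^sup>2" by simp
  then have "sqrt (\<Sum>n. (N12 T1 T2 (snd ?d n))\<^sup>2) < sqrt (e\<^sup>2)"
    by (rule real_sqrt_less_mono)
  then have "tnorm T1 T2 ?d < sqrt (e\<^sup>2)" unfolding tnorm_def fst_d by simp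
  then show ?thesis using e trunc_G[of N z] by (intro bexI[of _ "trunc N z"]) simp_all
qed

lemma fst_V1_pow: "fst ((V1f T1 S ^^ n) z) = (T1 ^^ n) (fst z)"
  by (induction n) (simp_all add: V1f_def)

lemma fst_V2_pow: "fst ((V2f T2 R ^^ n) z) = (T2 ^^ n) (fst z)"
  by (induction n) (simp_all add: V2f_def)

lemma main_result:
  "tlinear_isometry T1 T2 (V1f T1 S) \<and> tlinear_isometry T1 T2 (V2f T2 R)
     \<and> (\<forall>z\<in>tilde_space T1 T2. V1f T1 S (V2f T2 R z) = V2f T2 R (V1f T1 S z))
     \<and> (\<forall>x s1 s2. PX ((V1f T1 S ^^ s1) ((V2f T2 R ^^ s2) (temb x))) = (T1 ^^ s1) ((T2 ^^ s2) x))
     \<and> tclosed_span_eq T1 T2 {(V1f T1 S ^^ s1) ((V2f T2 R ^^ s2) (temb x)) | x s1 s2. True}"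
proof (intro conjI ballI allI)
  show "tlinear_isometry T1 T2 (V1f T1 S)"
    unfolding tlinear_isometry_def using V1_norm V1_add V1_scale by auto
  show "tlinear_isometry T1 T2 (V2f T2 R)"
    unfolding tlinear_isometry_def using V2_norm V2_add V2_scale by auto
  show "V1f T1 S (V2f T2 R z) = V2f T2 R (V1f T1 S z)" for z by (rule V_comm)
  show "PX ((V1f T1 S ^^ s1) ((V2f T2 R ^^ s2) (temb x))) = (T1 ^^ s1) ((T2 ^^ s2) x)" for x s1 s2
    unfolding PX_def by (simp add: fst_V1_pow fst_V2_pow temb_def)
  show "tclosed_span_eq T1 T2 {(V1f T1 S ^^ s1) ((V2f T2 R ^^ s2) (temb x)) | x s1 s2. True}"
    unfolding tclosed_span_eq_def using span_sub density unfolding GG_def by blast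
qed

end

theorem theorem2p3:
  fixes T1 T2 :: "'a::{complex_normed_vector, banach} \<Rightarrow> 'a"
    and S :: "'a \<times> 'a \<Rightarrow> 'a \<times> 'a"
  assumes "cblinear T1" and "cblinear T2"
    and "onorm T1 < 1" and "onorm T2 < 1"
    and "T1 \<circ> T2 = T2 \<circ> T1"
    and "is_norm (A_T T1)" and "is_norm (A_T T2)"
    and "unitary12 T1 T2 S"
    and "\<forall>x. S (T2 x, x) = (x, T1 x)"
  shows "\<exists>V1 V2. tlinear_isometry T1 T2 V1 \<and> tlinear_isometry T1 T2 V2
     \<and> (\<forall>z\<in>tilde_space T1 T2. V1 (V2 z) = V2 (V1 z))
     \<and> (\<forall>x s1 s2. PX ((V1 ^^ s1) ((V2 ^^ s2) (temb x))) = (T1 ^^ s1) ((T2 ^^ s2) x))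
     \<and> tclosed_span_eq T1 T2 {(V1 ^^ s1) ((V2 ^^ s2) (temb x)) | x s1 s2. True}"
  using main_result[OF assms refl] by blast

end
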